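(* Let $X_1,X_2,\dots$ be i.i.d. Bernoulli$(1/2)$ random variables, $S_0=0$ and $S_k=\sum_{i=1}^k X_i$. Then $$a_{\mathrm{kn}}=\mathbb E\left[\sup_{k\ge0}\frac{S_k}{1+k-S_k}\right]\le 2.1.$$ *)

theory Defs
  imports "HOL-Probability.Probability"
begin

definition partial_sum :: "(nat \<Rightarrow> 'a \<Rightarrow> bool) \<Rightarrow> nat \<Rightarrow> 'a \<Rightarrow> real" where
  "partial_sum X k \<omega> = (\<Sum>i\<in>{1..k}. of_bool (X i \<omega>))"

end

theory Submission
  imports Defs
begin


fun wv :: "nat \<Rightarrow> nat \<Rightarrow> bool list \<Rightarrow> int" where
  "wv q j [] = 0"
| "wv q j (b # bs) = (if b then int q else - int j) + wv q j bs"

lemma wv_append: "wv q j (xs @ ys) = wv q j xs + wv q j ys"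
  by (induction xs) auto

definition reach :: "nat \<Rightarrow> nat \<Rightarrow> int \<Rightarrow> bool list \<Rightarrow> bool" where
  "reach q j w bs = (\<exists>k\<le>length bs. w + wv q j (take k bs) > int j)"

lemma reach_Nil: "reach q j w [] = (w > int j)"
  by (auto simp: reach_def)

lemma reach_Cons: "reach q j w (b # bs) = (w > int j \<or> reach q j (w + (if b then int q else - int j)) bs)"
proof
  assume "reach q j w (b # bs)"
  then obtain k where k: "k \<le> Suc (length bs)" "w + wv q j (take k (b # bs)) > int j"
    by (auto simp: reach_def)
  show "w > int j \<or> reach q j (w + (if b then int q else - int j)) bs"
  proof (cases k)
    case 0 then show ?thesis using k by simp
  next
    case (Suc m) then show ?thesis using k unfolding reach_def
      by (intro disjI2 exI[of _ m]) (auto simp: algebra_simps)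
  qed
next
  assume "w > int j \<or> reach q j (w + (if b then int q else - int j)) bs"
  then show "reach q j w (b # bs)"
  proof
    assume "w > int j" then show ?thesis unfolding reach_def by (intro exI[of _ 0]) auto
  next
    assume "reach q j (w + (if b then int q else - int j)) bs"
    then obtain m where "m \<le> length bs" "w + (if b then int q else - int j) + wv q j (take m bs) > int j"
      by (auto simp: reach_def)
    then show ?thesis unfolding reach_def by (intro exI[of _ "Suc m"]) (auto simp: algebra_simps)
  qed
qed

lemma lists_Suc: "{bs::bool list. length bs = Suc n} = Cons True ` {bs. length bs = n} \<union> Cons False ` {bs. length bs = n}"
  by (auto simp: length_Suc_conv image_iff)

lemma finite_lists: "finite {bs::bool list. length bs = n}"
  using finite_lists_length_eq[of "UNIV::bool set" n] by simp

lemma card_lists: "card {bs::bool list. length bs = n} = 2 ^ n"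
  using card_lists_length_eq[of "UNIV::bool set" n] by simp

lemma sum_lists_Suc:
  "(\<Sum>bs\<in>{bs::bool list. length bs = Suc n}. f bs) =
   (\<Sum>bs\<in>{bs. length bs = n}. f (True # bs)) + (\<Sum>bs\<in>{bs. length bs = n}. f (False # bs))"
  unfolding lists_Suc
  by (subst sum.union_disjoint) (auto simp: finite_lists sum.reindex)

definition phi :: "nat \<Rightarrow> real \<Rightarrow> int \<Rightarrow> real" where
  "phi j y w = (if w > int j then 1 else y ^ nat (int j + 1 - w))"

lemma phi_nonneg: "0 \<le> y \<Longrightarrow> 0 \<le> phi j y w"
  by (simp add: phi_def)

lemma phi_super:
  assumes y: "0 < y" "y \<le> 1" and feas: "1 + y ^ (q + j) \<le> 2 * y ^ q" and w: "\<not> w > int j"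
  shows "phi j y (w + int q) + phi j y (w - int j) \<le> 2 * phi j y w"
proof -
  define e where "e = nat (int j + 1 - w)"
  have e: "int e = int j + 1 - w" using w by (simp add: e_def)
  have pw: "phi j y w = y ^ e" using w by (simp add: phi_def e_def)
  have "int j + 1 - (w - int j) = int (e + j)" using e by simp
  then have n2: "nat (int j + 1 - (w - int j)) = e + j" by (simp only: nat_int)
  have p2: "phi j y (w - int j) = y ^ e * y ^ j"
    using w n2 by (simp add: phi_def power_add)
  have p1: "phi j y (w + int q) * y ^ q \<le> y ^ e"
  proof (cases "w + int q > int j")
    case True
    then have "q \<ge> e" using e by linarith
    then have "y ^ q \<le> y ^ e" using y by (simp add: power_decreasing)
    then show ?thesis using True by (simp add: phi_def)
  next
    case False
    then have "e = nat (int j + 1 - (w + int q)) + q" using e by linarith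
    then show ?thesis using False by (simp add: phi_def power_add)
  qed
  have yq: "0 < y ^ q" using y by simp
  have "(phi j y (w + int q) + phi j y (w - int j)) * y ^ q \<le> y ^ e + y ^ e * y ^ j * y ^ q"
    using p1 p2 by (simp add: distrib_right)
  also have "\<dots> = y ^ e * (1 + y ^ (q + j))" by (simp add: algebra_simps power_add)
  also have "\<dots> \<le> y ^ e * (2 * y ^ q)" using feas y by (intro mult_left_mono) auto
  finally have "(phi j y (w + int q) + phi j y (w - int j)) * y ^ q \<le> (2 * phi j y w) * y ^ q"
    by (simp add: pw algebra_simps)
  then show ?thesis using yq by simp
qed

lemma count_bound:
  assumes y: "0 < y" "y \<le> 1" and feas: "1 + y ^ (q + j) \<le> 2 * y ^ q"
  shows "(\<Sum>bs\<in>{bs::bool list. length bs = n}. (if reach q j w bs then 1 else 0 :: real)) \<le> 2 ^ n * phi j y w"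
proof (induction n arbitrary: w)
  case 0
  have "{bs::bool list. length bs = 0} = {[]}" by auto
  then show ?case using y by (simp add: reach_Nil phi_def)
next
  case (Suc n)
  show ?case
  proof (cases "w > int j")
    case True
    then have "(\<Sum>bs\<in>{bs::bool list. length bs = Suc n}. (if reach q j w bs then 1 else 0 :: real)) = (\<Sum>bs\<in>{bs::bool list. length bs = Suc n}. 1)"
      by (intro sum.cong) (auto simp: reach_def intro!: exI[of _ 0])
    then show ?thesis using True by (simp add: card_lists phi_def)
  next
    case False
    have "(\<Sum>bs\<in>{bs::bool list. length bs = Suc n}. (if reach q j w bs then 1 else 0 :: real))
       = (\<Sum>bs\<in>{bs::bool list. length bs = n}. (if reach q j (w + int q) bs then 1 else 0 :: real))
       + (\<Sum>bs\<in>{bs::bool list. length bs = n}. (if reach q j (w - int j) bs then 1 else 0 :: real))"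
      using False by (simp add: sum_lists_Suc reach_Cons)
    also have "\<dots> \<le> 2 ^ n * phi j y (w + int q) + 2 ^ n * phi j y (w - int j)"
      using Suc.IH by (intro add_mono) auto
    also have "\<dots> \<le> 2 ^ Suc n * phi j y w"
      using mult_left_mono[OF phi_super[OF y feas False], of "2^n"] by (simp add: algebra_simps)
    finally show ?thesis .
  qed
qed



definition Ln :: "(nat \<Rightarrow> 'a \<Rightarrow> bool) \<Rightarrow> nat \<Rightarrow> 'a \<Rightarrow> bool list" where
  "Ln X n \<omega> = map (\<lambda>i. X (Suc i) \<omega>) [0..<n]"

lemma Ln_Suc: "Ln X (Suc n) \<omega> = Ln X n \<omega> @ [X (Suc n) \<omega>]"
  by (simp add: Ln_def)

lemma length_Ln[simp]: "length (Ln X n \<omega>) = n"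
  by (simp add: Ln_def)

lemma take_Ln: "k \<le> n \<Longrightarrow> take k (Ln X n \<omega>) = Ln X k \<omega>"
  by (simp add: Ln_def take_map take_upt)

lemma ps_Suc: "partial_sum X (Suc k) \<omega> = partial_sum X k \<omega> + of_bool (X (Suc k) \<omega>)"
  by (simp add: partial_sum_def)

lemma walk_Ln:
  "real q * partial_sum X k \<omega> - real j * (real k - partial_sum X k \<omega>) = of_int (wv q j (Ln X k \<omega>))"
proof (induction k)
  case 0 then show ?case by (simp add: partial_sum_def Ln_def)
next
  case (Suc k)
  then show ?case by (simp add: ps_Suc Ln_Suc wv_append algebra_simps)
qed

definition cyl :: "'a measure \<Rightarrow> (nat \<Rightarrow> 'a \<Rightarrow> bool) \<Rightarrow> nat \<Rightarrow> bool list \<Rightarrow> 'a set" where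
  "cyl M X n bs = space M \<inter> (\<Inter>i\<in>{1..n}. X i -` {bs ! (i - 1)})"

lemma cyl_mem:
  assumes "length bs = n"
  shows "\<omega> \<in> cyl M X n bs \<longleftrightarrow> \<omega> \<in> space M \<and> Ln X n \<omega> = bs"
proof -
  have "(\<forall>i\<in>{1..n}. X i \<omega> = bs ! (i - 1)) \<longleftrightarrow> (\<forall>i<n. X (Suc i) \<omega> = bs ! i)"
  proof
    assume h: "\<forall>i\<in>{1..n}. X i \<omega> = bs ! (i - 1)"
    show "\<forall>i<n. X (Suc i) \<omega> = bs ! i"
    proof (intro allI impI)
      fix i assume "i < n" then show "X (Suc i) \<omega> = bs ! i" using h[rule_format, of "Suc i"] by simp
    qed
  next
    assume h: "\<forall>i<n. X (Suc i) \<omega> = bs ! i"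
    show "\<forall>i\<in>{1..n}. X i \<omega> = bs ! (i - 1)"
    proof
      fix i assume "i \<in> {1..n}"
      then have "Suc (i - 1) = i" "i - 1 < n" by auto
      then show "X i \<omega> = bs ! (i - 1)" using h by metis
    qed
  qed
  moreover have "Ln X n \<omega> = bs \<longleftrightarrow> (\<forall>i<n. X (Suc i) \<omega> = bs ! i)"
    using assms by (auto simp: Ln_def list_eq_iff_nth_eq)
  ultimately show ?thesis by (auto simp: cyl_def)
qed

context
  fixes M :: "'a measure" and X :: "nat \<Rightarrow> 'a \<Rightarrow> bool"
  assumes P: "prob_space M"
    and ind: "prob_space.indep_vars M (\<lambda>_. count_space UNIV) X {1..}"
    and dis: "\<And>i. i \<ge> 1 \<Longrightarrow> distr M (count_space UNIV) (X i) = measure_pmf (bernoulli_pmf (1/2))"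
begin

interpretation prob_space M by (rule P)

lemma rv: "i \<ge> 1 \<Longrightarrow> X i \<in> measurable M (count_space UNIV)"
  using ind unfolding indep_vars_def by auto

lemma half: "i \<ge> 1 \<Longrightarrow> prob (X i -` {b} \<inter> space M) = 1/2"
proof -
  assume i: "i \<ge> 1"
  have "prob (X i -` {b} \<inter> space M) = measure (distr M (count_space UNIV) (X i)) {b}"
    by (rule measure_distr[symmetric]) (use rv[OF i] in auto)
  also have "\<dots> = pmf (bernoulli_pmf (1/2)) b" using dis[OF i] by (simp add: measure_pmf_single)
  also have "\<dots> = 1/2" by (cases b) auto
  finally show ?thesis .
qed

lemma cyl_sets: "cyl M X n bs \<in> sets M"
proof (cases "n = 0")
  case True then show ?thesis by (simp add: cyl_def)
next
  case False
  have "cyl M X n bs = (\<Inter>i\<in>{1..n}. X i -` {bs ! (i - 1)} \<inter> space M)"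
    using False by (auto simp: cyl_def)
  also have "\<dots> \<in> sets M"
    using False by (intro sets.finite_INT) (auto intro!: measurable_sets[OF rv])
  finally show ?thesis .
qed

lemma cyl_prob: "prob (cyl M X n bs) = (1/2) ^ n"
proof (cases "n = 0")
  case True then show ?thesis by (simp add: cyl_def prob_space)
next
  case False
  have "cyl M X n bs = (\<Inter>i\<in>{1..n}. X i -` {bs ! (i - 1)} \<inter> space M)"
    using False by (auto simp: cyl_def)
  also have "prob \<dots> = (\<Prod>i\<in>{1..n}. prob (X i -` {bs ! (i - 1)} \<inter> space M))"
    using False by (intro indep_varsD[OF ind]) auto
  also have "\<dots> = (\<Prod>i\<in>{1..n}. 1/2)" by (intro prod.cong) (auto simp: half)
  finally show ?thesis by simp
qed

definition Bn :: "nat \<Rightarrow> nat \<Rightarrow> nat \<Rightarrow> 'a set" where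
  "Bn q j n = {\<omega>\<in>space M. \<exists>k\<le>n. wv q j (Ln X k \<omega>) > int j}"

lemma Bn_eq: "Bn q j n = (\<Union>bs\<in>{bs \<in> {bs. length bs = n}. reach q j 0 bs}. cyl M X n bs)"
proof -
  have "\<And>\<omega>. reach q j 0 (Ln X n \<omega>) \<longleftrightarrow> (\<exists>k\<le>n. wv q j (Ln X k \<omega>) > int j)"
    unfolding reach_def by (auto simp: take_Ln)
  then have e1: "Bn q j n = {\<omega>\<in>space M. reach q j 0 (Ln X n \<omega>)}" by (auto simp: Bn_def)
  have e2: "{\<omega>\<in>space M. reach q j 0 (Ln X n \<omega>)} = (\<Union>bs\<in>{bs \<in> {bs. length bs = n}. reach q j 0 bs}. cyl M X n bs)"
  proof (intro equalityI subsetI)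
    fix \<omega> assume "\<omega> \<in> {\<omega>\<in>space M. reach q j 0 (Ln X n \<omega>)}"
    then show "\<omega> \<in> (\<Union>bs\<in>{bs \<in> {bs. length bs = n}. reach q j 0 bs}. cyl M X n bs)"
      by (auto simp: cyl_mem intro!: bexI[of _ "Ln X n \<omega>"])
  next
    fix \<omega> assume "\<omega> \<in> (\<Union>bs\<in>{bs \<in> {bs. length bs = n}. reach q j 0 bs}. cyl M X n bs)"
    then show "\<omega> \<in> {\<omega>\<in>space M. reach q j 0 (Ln X n \<omega>)}" by (auto simp: cyl_mem)
  qed
  show ?thesis using e1 e2 by simp
qed

lemma Bn_sets: "Bn q j n \<in> sets M"
  unfolding Bn_eq by (intro sets.finite_UN) (auto simp: cyl_sets finite_lists)

lemma Bn_prob: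
  assumes y: "0 < y" "y \<le> 1" and feas: "1 + y ^ (q + j) \<le> 2 * y ^ q"
  shows "prob (Bn q j n) \<le> y ^ (j + 1)"
proof -
  let ?G = "{bs \<in> {bs. length bs = n}. reach q j 0 bs}"
  have "prob (Bn q j n) = (\<Sum>bs\<in>?G. prob (cyl M X n bs))"
    unfolding Bn_eq
  proof (rule measure_finite_Union)
    show "finite ?G" by (simp add: finite_lists)
    show "cyl M X n ` ?G \<subseteq> sets M" by (auto simp: cyl_sets)
    show "disjoint_family_on (cyl M X n) ?G"
      unfolding disjoint_family_on_def by (auto simp: cyl_mem)
    show "\<And>i. emeasure M (cyl M X n i) \<noteq> \<infinity>" by (simp add: cyl_sets)
  qed
  also have "\<dots> = (\<Sum>bs\<in>?G. (1/2) ^ n)" by (simp add: cyl_prob)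
  also have "\<dots> = (\<Sum>bs\<in>{bs::bool list. length bs = n}. if reach q j 0 bs then (1/2) ^ n else 0)"
    by (rule sum.inter_filter) (simp add: finite_lists)
  also have "\<dots> = (1/2) ^ n * (\<Sum>bs\<in>{bs::bool list. length bs = n}. if reach q j 0 bs then 1 else 0)"
    by (auto simp: sum_distrib_left intro!: sum.cong)
  also have "\<dots> \<le> (1/2) ^ n * (2 ^ n * phi j y 0)"
    by (intro mult_left_mono count_bound[OF y feas]) auto
  also have "\<dots> = phi j y 0" by (simp add: power_mult_distrib[symmetric])
  also have "\<dots> = y ^ (j + 1)" by (simp add: phi_def nat_add_distrib)
  finally show ?thesis .
qed

lemma rj: "(real j < real_of_int w) = (int j < w)"
  by (metis of_int_less_iff of_int_of_nat_eq)

lemma B_eq: "{\<omega>\<in>space M. \<exists>k. real q * partial_sum X k \<omega> - real j * (real k - partial_sum X k \<omega>) > real j}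
   = (\<Union>n. Bn q j n)"
  by (auto simp: Bn_def walk_Ln rj)

lemma B_sets: "{\<omega>\<in>space M. \<exists>k. real q * partial_sum X k \<omega> - real j * (real k - partial_sum X k \<omega>) > real j} \<in> sets M"
  unfolding B_eq by (auto intro: Bn_sets)

lemma B_emeasure:
  assumes y: "0 < y" "y \<le> 1" and feas: "1 + y ^ (q + j) \<le> 2 * y ^ q"
  shows "emeasure M {\<omega>\<in>space M. \<exists>k. real q * partial_sum X k \<omega> - real j * (real k - partial_sum X k \<omega>) > real j}
     \<le> ennreal (y ^ (j + 1))"
proof -
  have inc: "incseq (Bn q j)"
    by (auto simp: incseq_def Bn_def) (meson order_trans)
  have "emeasure M (\<Union>n. Bn q j n) = (SUP n. emeasure M (Bn q j n))"
    by (rule SUP_emeasure_incseq[symmetric]) (auto simp: Bn_sets inc)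
  also have "\<dots> \<le> ennreal (y ^ (j + 1))"
  proof (intro SUP_least)
    fix n show "emeasure M (Bn q j n) \<le> ennreal (y ^ (j + 1))"
      unfolding emeasure_eq_measure by (rule ennreal_leI[OF Bn_prob[OF y feas]])
  qed
  finally show ?thesis unfolding B_eq .
qed

end



lemma layer:
  fixes t :: "nat \<Rightarrow> real" and Z :: ennreal
  assumes mono: "\<And>l. t l \<le> t (Suc l)" and unb: "\<And>x. \<exists>l. x \<le> t l" and t0: "0 \<le> t 0"
  shows "Z \<le> ennreal (t 0) + (\<Sum>l. ennreal (t (Suc l) - t l) * indicator {z. ennreal (t l) < z} Z)"
proof -
  let ?f = "\<lambda>l. ennreal (t (Suc l) - t l) * indicator {z. ennreal (t l) < z} Z"
  have tm: "\<And>l n. l \<le> n \<Longrightarrow> t l \<le> t n"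
    by (rule lift_Suc_mono_le[of t]) (use mono in auto)
  have claim: "min Z (ennreal (t n)) \<le> ennreal (t 0) + (\<Sum>l<n. ?f l)" for n
  proof (induction n)
    case 0 then show ?case by simp
  next
    case (Suc n)
    show ?case
    proof (cases "ennreal (t n) < Z")
      case True
      have "(\<Sum>l<Suc n. ?f l) = (\<Sum>l<Suc n. ennreal (t (Suc l) - t l))"
      proof (intro sum.cong refl)
        fix l assume "l \<in> {..<Suc n}"
        then have "t l \<le> t n" using tm by auto
        then have "ennreal (t l) < Z" using True
          by (meson ennreal_leI le_less_trans)
        then show "?f l = ennreal (t (Suc l) - t l)" by simp
      qed
      also have "\<dots> = ennreal (\<Sum>l<Suc n. (t (Suc l) - t l))"
        by (rule sum_ennreal) (use mono in auto)
      also have "(\<Sum>l<Suc n. (t (Suc l) - t l)) = t (Suc n) - t 0"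
        by (rule sum_lessThan_telescope)
      finally have "ennreal (t 0) + (\<Sum>l<Suc n. ?f l) = ennreal (t (Suc n))"
        using tm[of 0 "Suc n"] t0 by (simp add: ennreal_plus[symmetric] del: ennreal_plus)
      then show ?thesis by simp
    next
      case False
      then have "min Z (ennreal (t (Suc n))) = min Z (ennreal (t n))"
        using mono[of n] by (metis ennreal_leI min.absorb1 not_le order_trans)
      also have "\<dots> \<le> ennreal (t 0) + (\<Sum>l<n. ?f l)" by (rule Suc.IH)
      also have "\<dots> \<le> ennreal (t 0) + (\<Sum>l<Suc n. ?f l)"
        by (intro add_left_mono) simp
      finally show ?thesis .
    qed
  qed
  have partial: "(\<Sum>l<n. ?f l) \<le> (\<Sum>l. ?f l)" for n
    by (intro sum_le_suminf) auto
  show ?thesis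
  proof (rule dense_le)
    fix x assume x: "x < Z"
    then have "x < top" using top.not_eq_extremum by fastforce
    then obtain r where r: "x = ennreal r" "0 \<le> r" using ennreal_cases[of x] by auto
    obtain n where n: "r \<le> t n" using unb by blast
    have "x \<le> min Z (ennreal (t n))" using x r n by (auto intro: ennreal_leI)
    also have "\<dots> \<le> ennreal (t 0) + (\<Sum>l<n. ?f l)" by (rule claim)
    also have "\<dots> \<le> ennreal (t 0) + (\<Sum>l. ?f l)" by (intro add_left_mono partial)
    finally show "x \<le> ennreal (t 0) + (\<Sum>l. ?f l)" .
  qed
qed



definition jl :: "nat \<Rightarrow> nat" where
  "jl l = (if l < 9 then [1,6,7,3,2,5,3,4,5] ! l else l - 3)"
definition ql :: "nat \<Rightarrow> nat" where
  "ql l = (if l < 9 then [1,5,5,2,1,2,1,1,1] ! l else 1)"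
definition yl :: "nat \<Rightarrow> real" where
  "yl l = (if l < 9 then [1,30/31,18/19,17/20,13/21,28/37,31/57,13/25,26/51] ! l else 26/51)"
definition tg :: "nat \<Rightarrow> real" where
  "tg l = real (jl l) / real (ql l)"

lemma less9: "l < (9::nat) \<Longrightarrow> l = 0 \<or> l = 1 \<or> l = 2 \<or> l = 3 \<or> l = 4 \<or> l = 5 \<or> l = 6 \<or> l = 7 \<or> l = 8"
  by auto

lemma ql_pos: "0 < ql l"
proof (cases "l < 9")
  case True then show ?thesis using less9[OF True] by (auto simp: ql_def)
qed (simp add: ql_def)

lemma yl_pos: "0 < yl l" and yl_le: "yl l \<le> 1"
proof -
  have "0 < yl l \<and> yl l \<le> 1"
  proof (cases "l < 9")
    case True then show ?thesis using less9[OF True] by (auto simp: yl_def)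
  qed (simp add: yl_def)
  then show "0 < yl l" "yl l \<le> 1" by auto
qed

lemma feas: "1 + yl l ^ (ql l + jl l) \<le> 2 * yl l ^ ql l"
proof (cases "l < 9")
  case True then show ?thesis using less9[OF True] by (auto simp: yl_def ql_def jl_def power_divide)
next
  case False
  then have y: "yl l = 26/51" "ql l = 1" "jl l = l - 3" by (auto simp: yl_def ql_def jl_def)
  have "(26/51::real) ^ (1 + (l - 3)) \<le> (26/51) ^ 7"
    using False by (intro power_decreasing) auto
  also have "\<dots> \<le> 2 * (26/51) - 1" by (simp add: power_divide)
  finally have h: "(26/51::real) ^ (1 + (l - 3)) \<le> 2 * (26/51) - 1" .
  show ?thesis unfolding y(1,2,3) using h by (simp only: power_one_right)
qed

lemma tg_mono: "tg l \<le> tg (Suc l)"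
proof (cases "l < 9")
  case True then show ?thesis using less9[OF True] by (auto simp: tg_def ql_def jl_def)
next
  case False then show ?thesis by (simp add: tg_def ql_def jl_def)
qed

lemma tg_unb: "\<exists>l. x \<le> tg l"
proof -
  obtain n :: nat where "x \<le> real n" using real_arch_simple by blast
  then show ?thesis by (intro exI[of _ "n + 9"]) (simp add: tg_def ql_def jl_def)
qed

lemma tg0: "tg 0 = 1" by (simp add: tg_def ql_def jl_def)

definition al :: "nat \<Rightarrow> real" where
  "al l = (tg (Suc l) - tg l) * yl l ^ (jl l + 1)"

lemma al_tail: "al (i + 9) = (26/51) ^ 7 * (26/51) ^ i"
  by (simp add: al_def tg_def ql_def jl_def yl_def power_add[symmetric] algebra_simps)

lemma al_nonneg: "0 \<le> al l"
  using tg_mono[of l] yl_pos[of l] by (simp add: al_def)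

lemma al_summable: "summable al"
proof -
  have "summable (\<lambda>i. al (i + 9))"
    unfolding al_tail by (intro summable_mult summable_geometric) simp
  then show ?thesis by (simp add: summable_iff_shift)
qed

lemma al_sum: "1 + (\<Sum>l. al l) \<le> 2.1"
proof -
  have "(\<Sum>l. al l) = (\<Sum>i. al (i + 9)) + (\<Sum>l<9. al l)"
    by (rule suminf_split_initial_segment[OF al_summable])
  also have "(\<Sum>i. al (i + 9)) = (26/51) ^ 7 * (1 / (1 - 26/51))"
    unfolding al_tail by (subst suminf_mult) (auto simp: suminf_geometric)
  also have "(\<Sum>l<9. al l) = al 0 + al 1 + al 2 + al 3 + al 4 + al 5 + al 6 + al 7 + al 8"
    by (simp add: numeral_eq_Suc)
  finally have e: "(\<Sum>l. al l) = (26/51) ^ 7 * (1 / (1 - 26/51)) + (al 0 + al 1 + al 2 + al 3 + al 4 + al 5 + al 6 + al 7 + al 8)" .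
  have "1 + ((26/51) ^ 7 * (1 / (1 - 26/51)) + (al 0 + al 1 + al 2 + al 3 + al 4 + al 5 + al 6 + al 7 + al 8)) \<le> (2.1::real)"
    by (simp add: al_def tg_def ql_def jl_def yl_def power_divide)
  then show ?thesis using e by simp
qed



lemma ps_bounds: "0 \<le> partial_sum X k \<omega>" "partial_sum X k \<omega> \<le> real k"
proof -
  show "0 \<le> partial_sum X k \<omega>" by (simp add: partial_sum_def sum_nonneg)
  have "partial_sum X k \<omega> \<le> (\<Sum>i\<in>{1..k}. 1)" unfolding partial_sum_def
    by (intro sum_mono) auto
  then show "partial_sum X k \<omega> \<le> real k" by simp
qed

theorem lemmaB1:
  fixes M :: "'a measure" and X :: "nat \<Rightarrow> 'a \<Rightarrow> bool"
  assumes "prob_space M"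
    and "prob_space.indep_vars M (\<lambda>_. count_space UNIV) X {1..}"
    and "\<And>i. i \<ge> 1 \<Longrightarrow> distr M (count_space UNIV) (X i) = measure_pmf (bernoulli_pmf (1/2))"
  shows "(\<integral>\<^sup>+ \<omega>. (SUP k. ennreal (partial_sum X k \<omega> / (1 + real k - partial_sum X k \<omega>))) \<partial>M)
           \<le> ennreal 2.1"
proof -
  interpret P: prob_space M by (rule assms(1))
  define B where "B l = {\<omega>\<in>space M. \<exists>k. real (ql l) * partial_sum X k \<omega> - real (jl l) * (real k - partial_sum X k \<omega>) > real (jl l)}" for l
  have Bs: "B l \<in> sets M" for l
    unfolding B_def by (rule B_sets[OF assms])
  have Bm: "emeasure M (B l) \<le> ennreal (yl l ^ (jl l + 1))" for l
    unfolding B_def by (rule B_emeasure[OF assms yl_pos yl_le feas])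
  have pt: "\<omega> \<in> B l" if w: "\<omega> \<in> space M"
    and lt: "ennreal (tg l) < (SUP k. ennreal (partial_sum X k \<omega> / (1 + real k - partial_sum X k \<omega>)))" for \<omega> l
  proof -
    obtain k where k: "ennreal (tg l) < ennreal (partial_sum X k \<omega> / (1 + real k - partial_sum X k \<omega>))"
      using lt by (auto simp: less_SUP_iff)
    have tg_nn: "0 \<le> tg l" by (simp add: tg_def)
    have lt2: "real (jl l) / real (ql l) < partial_sum X k \<omega> / (1 + real k - partial_sum X k \<omega>)"
      using k tg_nn by (simp add: ennreal_less_iff tg_def)
    have D: "0 < 1 + real k - partial_sum X k \<omega>" using ps_bounds[of X k \<omega>] by simp
    have q: "0 < real (ql l)" using ql_pos by simp
    have "real (jl l) * (1 + real k - partial_sum X k \<omega>) < partial_sum X k \<omega> * real (ql l)"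
      using lt2 D q by (simp add: divide_less_eq less_divide_eq field_simps)
    then have "real (ql l) * partial_sum X k \<omega> - real (jl l) * (real k - partial_sum X k \<omega>) > real (jl l)"
      by (simp add: algebra_simps)
    then show ?thesis using w unfolding B_def by blast
  qed
  let ?Z = "\<lambda>\<omega>. (SUP k. ennreal (partial_sum X k \<omega> / (1 + real k - partial_sum X k \<omega>)))"
  let ?g = "\<lambda>l \<omega>. ennreal (tg (Suc l) - tg l) * indicator (B l) \<omega>"
  have gm: "?g l \<in> borel_measurable M" for l
    by (intro borel_measurable_times_ennreal borel_measurable_const borel_measurable_indicator Bs)
  have pw: "?Z \<omega> \<le> 1 + (\<Sum>l. ?g l \<omega>)" if w: "\<omega> \<in> space M" for \<omega>
  proof -
    have "?Z \<omega> \<le> ennreal (tg 0) + (\<Sum>l. ennreal (tg (Suc l) - tg l) * indicator {z. ennreal (tg l) < z} (?Z \<omega>))"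
      by (rule layer) (use tg_mono tg_unb tg0 in auto)
    also have "\<dots> \<le> 1 + (\<Sum>l. ?g l \<omega>)"
      unfolding tg0 ennreal_1
    proof (intro add_left_mono suminf_le)
      fix l show "ennreal (tg (Suc l) - tg l) * indicator {z. ennreal (tg l) < z} (?Z \<omega>) \<le> ?g l \<omega>"
        using pt[OF w, of l] by (auto simp: indicator_def)
    qed auto
    finally show ?thesis .
  qed
  have "(\<integral>\<^sup>+ \<omega>. ?Z \<omega> \<partial>M) \<le> (\<integral>\<^sup>+ \<omega>. (1 + (\<Sum>l. ?g l \<omega>)) \<partial>M)"
    by (intro nn_integral_mono pw)
  also have "\<dots> = (\<integral>\<^sup>+ \<omega>. 1 \<partial>M) + (\<integral>\<^sup>+ \<omega>. (\<Sum>l. ?g l \<omega>) \<partial>M)"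
    by (rule nn_integral_add) (auto intro!: borel_measurable_suminf_order gm)
  also have "(\<integral>\<^sup>+ \<omega>. (\<Sum>l. ?g l \<omega>) \<partial>M) = (\<Sum>l. \<integral>\<^sup>+ \<omega>. ?g l \<omega> \<partial>M)"
    by (rule nn_integral_suminf) (rule gm)
  also have "\<dots> = (\<Sum>l. ennreal (tg (Suc l) - tg l) * emeasure M (B l))"
    by (simp add: nn_integral_cmult_indicator Bs)
  also have "\<dots> \<le> (\<Sum>l. ennreal (al l))"
  proof (intro suminf_le)
    fix l
    have "ennreal (tg (Suc l) - tg l) * emeasure M (B l) \<le> ennreal (tg (Suc l) - tg l) * ennreal (yl l ^ (jl l + 1))"
      by (intro mult_left_mono Bm) auto
    also have "\<dots> = ennreal (al l)"
      unfolding al_def using tg_mono[of l] yl_pos[of l] by (simp add: ennreal_mult)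
    finally show "ennreal (tg (Suc l) - tg l) * emeasure M (B l) \<le> ennreal (al l)" .
  qed auto
  also have "(\<Sum>l. ennreal (al l)) = ennreal (\<Sum>l. al l)"
    by (rule suminf_ennreal2) (auto simp: al_nonneg al_summable)
  also have "(\<integral>\<^sup>+ \<omega>. 1 \<partial>M) = 1" by (simp add: P.emeasure_space_1)
  also have "1 + ennreal (\<Sum>l. al l) = ennreal (1 + (\<Sum>l. al l))"
    using suminf_nonneg[OF al_summable] al_nonneg by (simp add: ennreal_plus)
  also have "\<dots> \<le> ennreal 2.1" by (intro ennreal_leI al_sum)
  finally show ?thesis by simp
qed


end
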